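(* There is a constant $C_3>0$ such that for every $\ell\ge1$ and all $p,q\in\mathbb N\times\mathbb Z$, $$(G_1\cdot G_2)^\ell(p,q)\le C_3^{|p|+|q|}.$$ Moreover, if $(G_1\cdot G_2)^\ell(p,q)\ne0$ then $q-p\in\Sigma_\ell$, where $$\Sigma_\ell=\{(x,y)\in\mathbb Z^2:\ x+y\ge\ell,\ y\ge-2\ell,\ 4x+3y\ge0,\ 2x+3y\ge0,\ y\text{ even}\}.$$
   Context: $\mathbb N=\{0,1,2,\dots\}$; for $t\in\mathbb R$, $\langle t\rangle:=1+|t|$. A directed weighted $\mathbb Z^2$-graph is a map $G\colon\mathbb Z^2\times\mathbb Z^2\to[0,\infty)$. The product is $(G\cdot G')(p,q)=\sum_{r\in\mathbb Z^2}G(p,r)G'(r,q)$, and $G^\ell$ is the $\ell$-fold product of $G$ with itself. $G_1$ is the graph whose only nonzero weights are: $G_1((k,h),(k-2,h+2))=\frac{\langle\max\{k,|h|\}\rangle}{\langle h\rangle}$ for $k\ge2$, $h\in\mathbb Z$; $G_1((k,h),(k,h))=1$ for $k\ge0$, $h\in\mathbb Z$; $G_1((k,h),(k+2,h-2))=\frac{\langle h\rangle}{\langle\max\{k,|h|\}\rangle}$ for $k\ge0$, $h\in\mathbb Z$. $G_2((k,h),(k',h'))=1$ if $k,k'\ge0$, $(k,h)\ne(k',h')$ and $(k'-k,h'-h)\in\{c_1(1,0)+c_2(-1,2): c_1,c_2\in\mathbb N\}$, and $G_2((k,h),(k',h'))=0$ otherwise. *)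

theory Defs
  imports "HOL-Analysis.Analysis"
begin

text \<open>Points of Z^2 are pairs of integers. Weighted directed graphs take values in
  [0,\<infinity>); we use ennreal so that the (possibly infinite) sums defining the
  product are always meaningful.\<close>

type_synonym zgraph = "int \<times> int \<Rightarrow> int \<times> int \<Rightarrow> ennreal"

definition jbr :: "real \<Rightarrow> real" where
  "jbr t = 1 + \<bar>t\<bar>"

definition gprod :: "zgraph \<Rightarrow> zgraph \<Rightarrow> zgraph" where
  "gprod G G' p q = (\<Sum>\<^sub>\<infinity> r\<in>(UNIV :: (int \<times> int) set). G p r * G' r q)"

definition gid :: zgraph where
  "gid p q = (if p = q then 1 else 0)"

primrec gpow :: "zgraph \<Rightarrow> nat \<Rightarrow> zgraph" where
  "gpow G 0 = gid"
| "gpow G (Suc n) = (if n = 0 then G else gprod (gpow G n) G)"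

definition G1 :: zgraph where
  "G1 p q = (let k = fst p; h = snd p in
     if k \<ge> 2 \<and> q = (k - 2, h + 2) then
       ennreal (jbr (real_of_int (max k \<bar>h\<bar>)) / jbr (real_of_int h))
     else if k \<ge> 0 \<and> q = (k, h) then 1
     else if k \<ge> 0 \<and> q = (k + 2, h - 2) then
       ennreal (jbr (real_of_int h) / jbr (real_of_int (max k \<bar>h\<bar>)))
     else 0)"

definition G2 :: zgraph where
  "G2 p q = (if fst p \<ge> 0 \<and> fst q \<ge> 0 \<and> p \<noteq> q \<and>
       (\<exists>c1 c2 :: nat. fst q - fst p = int c1 - int c2 \<and> snd q - snd p = 2 * int c2)
     then 1 else 0)"

definition Sigma_set :: "nat \<Rightarrow> (int \<times> int) set" where
  "Sigma_set l = {(x, y). x + y \<ge> int l \<and> y \<ge> - 2 * int l \<and> 4 * x + 3 * y \<ge> 0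
                    \<and> 2 * x + 3 * y \<ge> 0 \<and> even y}"

definition norm1 :: "int \<times> int \<Rightarrow> real" where
  "norm1 p = real_of_int (\<bar>fst p\<bar> + \<bar>snd p\<bar>)"

end

theory Submission
  imports Defs
begin


definition mm :: "int \<times> int \<Rightarrow> real" where "mm v = 1 + real_of_int (max (fst v) \<bar>snd v\<bar>)"
definition tt :: "int \<times> int \<Rightarrow> real" where "tt v = 1 + real_of_int \<bar>snd v\<bar>"
definition PP :: "int \<times> int \<Rightarrow> real" where
  "PP v = real_of_int (snd v) / 2 * (ln (mm v) - ln (tt v))"

lemma mm_pos: "mm v \<ge> 1" unfolding mm_def by simp
lemma tt_pos: "tt v \<ge> 1" unfolding tt_def by simp
lemma mm_gt0: "mm v > 0" using mm_pos[of v] by simp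
lemma tt_gt0: "tt v > 0" using tt_pos[of v] by simp
lemma tt_le_mm: "tt v \<le> mm v" unfolding mm_def tt_def by simp
lemma lnR_nonneg: "ln (mm v) - ln (tt v) \<ge> 0"
  using tt_le_mm[of v] tt_pos[of v] by simp

lemma ln_diff_le: "(x::real) > 0 \<Longrightarrow> y > 0 \<Longrightarrow> ln x - ln y \<le> (x - y) / y"
proof -
  assume x: "x > 0" and y: "y > 0"
  have "ln (x / y) \<le> x / y - 1" using x y by (intro ln_le_minus_one) auto
  moreover have "ln (x/y) = ln x - ln y" using x y by (simp add: ln_div)
  moreover have "x / y - 1 = (x - y) / y" using y by (simp add: field_simps)
  ultimately show ?thesis by simp
qed

lemma lnA:
  fixes x y c :: real
  assumes "x > 0" "y > 0" "\<bar>x - y\<bar> \<le> 2" "0 \<le> c" "c \<le> 2 * x" "c \<le> 2 * y"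
  shows "c * \<bar>ln x - ln y\<bar> \<le> 4"
proof (cases "x \<ge> y")
  case True
  have "ln x - ln y \<le> (x - y) / y" using assms by (intro ln_diff_le) auto
  moreover have "ln x \<ge> ln y" using True assms by simp
  ultimately have "\<bar>ln x - ln y\<bar> \<le> (x - y) / y" by simp
  hence "c * \<bar>ln x - ln y\<bar> \<le> c * ((x - y) / y)" using assms by (intro mult_left_mono) auto
  also have "\<dots> \<le> (2 * y) * (2 / y)"
    using assms True by (intro mult_mono) (auto simp: divide_right_mono)
  also have "\<dots> = 4" using assms by simp
  finally show ?thesis .
next
  case False
  have "ln y - ln x \<le> (y - x) / x" using assms by (intro ln_diff_le) auto
  moreover have "ln y \<ge> ln x" using False assms by simp
  ultimately have "\<bar>ln x - ln y\<bar> \<le> (y - x) / x" by simp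
  hence "c * \<bar>ln x - ln y\<bar> \<le> c * ((y - x) / x)" using assms by (intro mult_left_mono) auto
  also have "\<dots> \<le> (2 * x) * (2 / x)"
    using assms False by (intro mult_mono) (auto simp: divide_right_mono)
  also have "\<dots> = 4" using assms by simp
  finally show ?thesis .
qed

lemma near_step:
  assumes "\<bar>k' - k\<bar> \<le> 2" "\<bar>h' - h\<bar> \<le> 2"
  shows "\<bar>real_of_int h' / 2 * ((ln (mm (k',h')) - ln (tt (k',h'))) - (ln (mm (k,h)) - ln (tt (k,h))))\<bar> \<le> 4"
proof -
  have m: "\<bar>real_of_int h'\<bar> * \<bar>ln (mm (k',h')) - ln (mm (k,h))\<bar> \<le> 4"
  proof (rule lnA)
    show "\<bar>mm (k', h') - mm (k, h)\<bar> \<le> 2" using assms unfolding mm_def by auto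
    show "\<bar>real_of_int h'\<bar> \<le> 2 * mm (k', h')" unfolding mm_def by auto
    show "\<bar>real_of_int h'\<bar> \<le> 2 * mm (k, h)" using assms unfolding mm_def by auto
  qed (use mm_gt0 in auto)
  have t: "\<bar>real_of_int h'\<bar> * \<bar>ln (tt (k',h')) - ln (tt (k,h))\<bar> \<le> 4"
  proof (rule lnA)
    show "\<bar>tt (k', h') - tt (k, h)\<bar> \<le> 2" using assms unfolding tt_def by auto
    show "\<bar>real_of_int h'\<bar> \<le> 2 * tt (k', h')" unfolding tt_def by auto
    show "\<bar>real_of_int h'\<bar> \<le> 2 * tt (k, h)" using assms unfolding tt_def by auto
  qed (use tt_gt0 in auto)
  have "\<bar>real_of_int h' / 2 * ((ln (mm (k',h')) - ln (tt (k',h'))) - (ln (mm (k,h)) - ln (tt (k,h))))\<bar>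
      = \<bar>real_of_int h'\<bar> / 2 * \<bar>(ln (mm (k',h')) - ln (mm (k,h))) - (ln (tt (k',h')) - ln (tt (k,h)))\<bar>"
  proof -
    have e: "(ln (mm (k',h')) - ln (tt (k',h'))) - (ln (mm (k,h)) - ln (tt (k,h)))
       = (ln (mm (k',h')) - ln (mm (k,h))) - (ln (tt (k',h')) - ln (tt (k,h)))" by simp
    show ?thesis unfolding e abs_mult by simp
  qed
  also have "\<dots> \<le> \<bar>real_of_int h'\<bar> / 2 * (\<bar>ln (mm (k',h')) - ln (mm (k,h))\<bar> + \<bar>ln (tt (k',h')) - ln (tt (k,h))\<bar>)"
    by (intro mult_left_mono) auto
  also have "\<dots> \<le> 4" using m t by (simp add: algebra_simps)
  finally show ?thesis .
qed

lemma PP_eq: "PP (k,h) = real_of_int h / 2 * (ln (mm (k,h)) - ln (tt (k,h)))"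
  unfolding PP_def by simp

lemma down_bound:
  "mm (k,h) / tt (k,h) \<le> exp 4 * exp (PP (k-2,h+2) - PP (k,h))"
proof -
  have n: "\<bar>real_of_int (h+2) / 2 * ((ln (mm (k-2,h+2)) - ln (tt (k-2,h+2))) - (ln (mm (k,h)) - ln (tt (k,h))))\<bar> \<le> 4"
    by (rule near_step) auto
  have "mm (k,h) / tt (k,h) = exp (ln (mm (k,h)) - ln (tt (k,h)))"
    using mm_gt0 tt_gt0 by (simp add: exp_diff)
  also have "\<dots> \<le> exp (4 + (PP (k-2,h+2) - PP (k,h)))"
  proof -
    have e: "PP (k-2,h+2) - PP (k,h) - (ln (mm (k,h)) - ln (tt (k,h))) = real_of_int (h+2) / 2 * ((ln (mm (k-2,h+2)) - ln (tt (k-2,h+2))) - (ln (mm (k,h)) - ln (tt (k,h))))"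
      unfolding PP_eq by (simp add: field_simps)
    show ?thesis using n unfolding abs_le_iff e[symmetric] by simp
  qed
  also have "\<dots> = exp 4 * exp (PP (k-2,h+2) - PP (k,h))" by (simp add: exp_add)
  finally show ?thesis .
qed

lemma up_bound:
  "tt (k,h) / mm (k,h) \<le> exp 4 * exp (PP (k+2,h-2) - PP (k,h))"
proof -
  have n: "\<bar>real_of_int (h-2) / 2 * ((ln (mm (k+2,h-2)) - ln (tt (k+2,h-2))) - (ln (mm (k,h)) - ln (tt (k,h))))\<bar> \<le> 4"
    by (rule near_step) auto
  have "tt (k,h) / mm (k,h) = exp (ln (tt (k,h)) - ln (mm (k,h)))"
    using mm_gt0 tt_gt0 by (simp add: exp_diff)
  also have "\<dots> \<le> exp (4 + (PP (k+2,h-2) - PP (k,h)))"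
  proof -
    have e: "PP (k+2,h-2) - PP (k,h) + (ln (mm (k,h)) - ln (tt (k,h))) = real_of_int (h-2) / 2 * ((ln (mm (k+2,h-2)) - ln (tt (k+2,h-2))) - (ln (mm (k,h)) - ln (tt (k,h))))"
      unfolding PP_eq by (simp add: field_simps)
    show ?thesis using n unfolding abs_le_iff e[symmetric] by simp
  qed
  also have "\<dots> = exp 4 * exp (PP (k+2,h-2) - PP (k,h))" by (simp add: exp_add)
  finally show ?thesis .
qed

lemma g2_bound:
  fixes c1 c2 :: nat
  shows "PP (k,h) - PP (k + int c1 - int c2, h + 2 * int c2) \<le> 2 * (real c1 + real c2)"
proof -
  define k' where "k' = k + int c1 - int c2"
  define h' where "h' = h + 2 * int c2"
  define m where "m = mm (k,h)"
  define m' where "m' = mm (k',h')"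
  define t where "t = tt (k,h)"
  define t' where "t' = tt (k',h')"
  have pos: "m > 0" "m' > 0" "t > 0" "t' > 0" unfolding m_def m'_def t_def t'_def
    using mm_gt0 tt_gt0 by auto
  have L: "ln m - ln t \<ge> 0" "ln m' - ln t' \<ge> 0" unfolding m_def m'_def t_def t'_def
    using lnR_nonneg by auto
  have P1: "PP (k,h) = real_of_int h / 2 * (ln m - ln t)" unfolding PP_eq m_def t_def ..
  have P2: "PP (k',h') = real_of_int h' / 2 * (ln m' - ln t')" unfolding PP_eq m'_def t'_def ..
  have "PP (k,h) - PP (k',h') \<le> 3/2 * (real c1 + real c2)"
  proof (cases "h \<ge> 0")
    case True
    hence hh: "h' \<ge> h" "h' \<ge> 0" unfolding h'_def by auto
    have "PP (k,h) - PP (k',h') = real_of_int h / 2 * ((ln m - ln m') + (ln t' - ln t)) - real c2 * (ln m' - ln t')"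
      unfolding P1 P2 by (simp add: h'_def field_simps)
    also have "\<dots> \<le> real_of_int h / 2 * ((ln m - ln m') + (ln t' - ln t))"
      using L by simp
    also have "\<dots> = real_of_int h / 2 * (ln m - ln m') + real_of_int h / 2 * (ln t' - ln t)"
      by (simp add: field_simps)
    also have "\<dots> \<le> real c2 / 2 + real c2"
    proof (rule add_mono)
      have a: "ln t' - ln t \<le> (t' - t) / t" using pos by (intro ln_diff_le) auto
      have tt': "t' - t = 2 * real c2" unfolding t_def t'_def tt_def h'_def using True by simp
      have "real_of_int h / 2 * (ln t' - ln t) \<le> real_of_int h / 2 * ((t' - t) / t)"
        using True a by (intro mult_left_mono) auto
      also have "\<dots> = (real_of_int h / t) * real c2" using tt' by (simp add: field_simps)
      also have "\<dots> \<le> 1 * real c2"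
        using pos True by (intro mult_right_mono) (auto simp: t_def tt_def)
      finally show "real_of_int h / 2 * (ln t' - ln t) \<le> real c2" by simp
      have b: "ln m - ln m' \<le> (m - m') / m'" using pos by (intro ln_diff_le) auto
      have hm: "real_of_int h \<le> m'" unfolding m'_def mm_def using hh by simp
      have mm': "m - m' \<le> real c2" unfolding m_def m'_def mm_def k'_def h'_def using True by auto
      show "real_of_int h / 2 * (ln m - ln m') \<le> real c2 / 2"
      proof (cases "m \<le> m'")
        case True
        hence "ln m - ln m' \<le> 0" using pos by simp
        thus ?thesis using \<open>h \<ge> 0\<close> mult_nonneg_nonpos[of "real_of_int h / 2" "ln m - ln m'"] by simp
      next
        case False
        have "real_of_int h / 2 * (ln m - ln m') \<le> real_of_int h / 2 * ((m - m') / m')"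
          using \<open>h \<ge> 0\<close> b by (intro mult_left_mono) auto
        also have "\<dots> = (real_of_int h / m') * ((m - m') / 2)" by (simp add: field_simps)
        also have "\<dots> \<le> 1 * ((m - m') / 2)"
          using pos hm False \<open>h \<ge> 0\<close> by (intro mult_right_mono) auto
        finally show ?thesis using mm' by simp
      qed
    qed
    also have "\<dots> \<le> 3/2 * (real c1 + real c2)" by simp
    finally show ?thesis .
  next
    case False
    show ?thesis
    proof (cases "h' \<ge> 0")
      case True
      have "PP (k,h) \<le> 0" unfolding P1 using False L by (simp add: mult_nonpos_nonneg)
      moreover have "PP (k',h') \<ge> 0" unfolding P2 using True L by simp
      ultimately show ?thesis by simp
    next
      case False2: False
      have hh: "\<bar>h'\<bar> \<le> \<bar>h\<bar>" "\<bar>h\<bar> - \<bar>h'\<bar> = 2 * int c2" using False False2 unfolding h'_def by auto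
      have "PP (k,h) - PP (k',h') = real_of_int \<bar>h'\<bar> / 2 * ((ln m' - ln m) + (ln t - ln t')) - real c2 * (ln m - ln t)"
      proof -
        have a: "real_of_int \<bar>h'\<bar> = - real_of_int h - 2 * real c2" using False2 unfolding h'_def by simp
        have b: "real_of_int h' = real_of_int h + 2 * real c2" unfolding h'_def by simp
        show ?thesis unfolding P1 P2 a b by (simp add: field_simps)
      qed
      also have "\<dots> \<le> real_of_int \<bar>h'\<bar> / 2 * ((ln m' - ln m) + (ln t - ln t'))"
        using L by simp
      also have "\<dots> = real_of_int \<bar>h'\<bar> / 2 * (ln m' - ln m) + real_of_int \<bar>h'\<bar> / 2 * (ln t - ln t')"
        by (rule distrib_left)
      also have "\<dots> \<le> real c1 / 2 + real c2"
      proof (rule add_mono)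
        have a: "ln t - ln t' \<le> (t - t') / t'" using pos by (intro ln_diff_le) auto
        have tt': "t - t' = 2 * real c2" unfolding t_def t'_def tt_def using hh by simp
        have "real_of_int \<bar>h'\<bar> / 2 * (ln t - ln t') \<le> real_of_int \<bar>h'\<bar> / 2 * ((t - t') / t')"
          using a by (intro mult_left_mono) auto
        also have "\<dots> = (real_of_int \<bar>h'\<bar> / t') * real c2" using tt' by (simp add: field_simps)
        also have "\<dots> \<le> 1 * real c2"
          using pos by (intro mult_right_mono) (auto simp: t'_def tt_def)
        finally show "real_of_int \<bar>h'\<bar> / 2 * (ln t - ln t') \<le> real c2" by simp
        have b: "ln m' - ln m \<le> (m' - m) / m" using pos by (intro ln_diff_le) auto
        have hm: "real_of_int \<bar>h'\<bar> \<le> m" unfolding m_def mm_def using hh by simp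
        have mm': "m' - m \<le> real c1" unfolding m_def m'_def mm_def k'_def using hh by auto
        show "real_of_int \<bar>h'\<bar> / 2 * (ln m' - ln m) \<le> real c1 / 2"
        proof (cases "m' \<le> m")
          case True
          hence "ln m' - ln m \<le> 0" using pos by simp
          thus ?thesis using mult_nonneg_nonpos[of "real_of_int \<bar>h'\<bar> / 2" "ln m' - ln m"] by simp
        next
          case False
          have "real_of_int \<bar>h'\<bar> / 2 * (ln m' - ln m) \<le> real_of_int \<bar>h'\<bar> / 2 * ((m' - m) / m)"
            using b by (intro mult_left_mono) auto
          also have "\<dots> = (real_of_int \<bar>h'\<bar> / m) * ((m' - m) / 2)" by (simp add: field_simps)
          also have "\<dots> \<le> 1 * ((m' - m) / 2)"
            using pos hm False by (intro mult_right_mono) auto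
          finally show ?thesis using mm' by simp
        qed
      qed
      also have "\<dots> \<le> 3/2 * (real c1 + real c2)" by simp
      finally show ?thesis .
    qed
  qed
  thus ?thesis unfolding k'_def h'_def by simp
qed



definition Tset :: "(int \<times> int) set" where
  "Tset = {v. snd v \<ge> -2 \<and> 2 * fst v + snd v \<ge> -2 \<and> fst v + snd v \<ge> 0}"

definition Dv :: "int \<times> int \<Rightarrow> real" where "Dv v = real_of_int (fst v + snd v)"

lemma G1_nz:
  assumes "G1 (k,h) s \<noteq> 0"
  shows "k \<ge> 0 \<and> (s = (k-2,h+2) \<and> G1 (k,h) s = ennreal (mm (k,h) / tt (k,h))
     \<or> s = (k,h) \<and> G1 (k,h) s = 1 \<or> s = (k+2,h-2) \<and> G1 (k,h) s = ennreal (tt (k,h) / mm (k,h)))"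
proof -
  have j1: "jbr (real_of_int (max k \<bar>h\<bar>)) = mm (k,h)" unfolding jbr_def mm_def by simp
  have j2: "jbr (real_of_int h) = tt (k,h)" unfolding jbr_def tt_def by simp
  show ?thesis using assms unfolding G1_def Let_def j1 j2 fst_conv snd_conv
    by (auto split: if_splits)
qed

lemma G1_w:
  assumes "G1 (k,h) s \<noteq> 0"
  shows "G1 (k,h) s \<le> ennreal (exp 4 * exp (PP s - PP (k,h)))"
  using G1_nz[OF assms]
proof (elim conjE disjE)
  assume "s = (k-2,h+2)" "G1 (k,h) s = ennreal (mm (k,h) / tt (k,h))"
  thus ?thesis using down_bound[of k h] by (simp add: ennreal_leI)
next
  assume "s = (k+2,h-2)" "G1 (k,h) s = ennreal (tt (k,h) / mm (k,h))"
  thus ?thesis using up_bound[of k h] by (simp add: ennreal_leI)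
next
  assume "s = (k,h)" "G1 (k,h) s = 1"
  moreover have "(1::real) \<le> exp 4" by simp
  ultimately show ?thesis by (simp add: ennreal_leI)
qed

lemma G2_nz:
  assumes "G2 s q \<noteq> 0"
  shows "G2 s q = 1 \<and> fst s \<ge> 0 \<and> fst q \<ge> 0 \<and> s \<noteq> q \<and>
    (\<exists>c1 c2 :: nat. fst q - fst s = int c1 - int c2 \<and> snd q - snd s = 2 * int c2)"
  using assms unfolding G2_def by (auto split: if_splits)

lemma term_bound:
  assumes "G1 r s * G2 s q \<noteq> 0"
  shows "G1 r s * G2 s q \<le> ennreal (exp 4 * exp (PP q - PP r + 2 * Dv (q - r)))
     \<and> q - r \<in> Tset \<and> q - r \<in> Sigma_set 1"
proof -
  obtain k h where r: "r = (k,h)" by (cases r)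
  have g1: "G1 (k,h) s \<noteq> 0" and g2: "G2 s q \<noteq> 0" using assms r by auto
  from G2_nz[OF g2] obtain c1 c2 :: nat where G2v: "G2 s q = 1" and sq: "s \<noteq> q"
    and c: "fst q - fst s = int c1 - int c2" "snd q - snd s = 2 * int c2" by blast
  have G1w: "G1 (k,h) s \<le> ennreal (exp 4 * exp (PP s - PP (k,h)))" by (rule G1_w[OF g1])
  have "\<exists>e::int. (e = -1 \<or> e = 0 \<or> e = 1) \<and> s = (k + 2*e, h - 2*e)"
    using G1_nz[OF g1]
  proof (elim conjE disjE)
    assume "s = (k-2,h+2)" thus ?thesis by (intro exI[of _ "-1"]) auto
  next
    assume "s = (k,h)" thus ?thesis by (intro exI[of _ "0"]) auto
  next
    assume "s = (k+2,h-2)" thus ?thesis by (intro exI[of _ "1"]) auto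
  qed
  then obtain e :: int where e: "e = -1 \<or> e = 0 \<or> e = 1" "s = (k + 2*e, h - 2*e)" by blast
  have qeq: "q = (fst s + int c1 - int c2, snd s + 2 * int c2)" using c by (cases q) auto
  have g2b: "PP s - PP q \<le> 2 * (real c1 + real c2)"
    using g2_bound[of "fst s" "snd s" c1 c2] qeq by simp
  have D: "Dv (q - r) = real c1 + real c2" unfolding Dv_def r using qeq e by simp
  have "G1 r s * G2 s q \<le> ennreal (exp 4 * exp (PP s - PP (k,h)))" using G1w G2v r by simp
  also have "\<dots> \<le> ennreal (exp 4 * exp (PP q - PP r + 2 * Dv (q - r)))"
    using g2b D r by (intro ennreal_leI mult_left_mono) auto
  finally have 1: "G1 r s * G2 s q \<le> ennreal (exp 4 * exp (PP q - PP r + 2 * Dv (q - r)))" .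
  have nz: "(c1, c2) \<noteq> (0,0)" using sq qeq by (cases s) auto
  have qr: "q - r = (2*e + int c1 - int c2, - 2*e + 2*int c2)" using qeq e r by simp
  have nz': "int c1 + int c2 \<ge> 1" using nz by auto
  have 2: "q - r \<in> Tset" unfolding Tset_def qr using e(1) by auto
  have ev: "even (- 2*e + 2*int c2)" by presburger
  have 3: "q - r \<in> Sigma_set 1" unfolding Sigma_set_def qr using e(1) nz' ev by auto
  show ?thesis using 1 2 3 by blast
qed


definition hb :: "int \<times> int \<Rightarrow> int \<times> int \<Rightarrow> real" where
  "hb r q = (if q - r \<in> Tset then 3 * (exp 4 * exp (PP q - PP r + 2 * Dv (q - r))) else 0)"

lemma hb_nonneg: "hb r q \<ge> 0" unfolding hb_def by simp
lemma infsum_nz: "infsum f A \<noteq> (0::ennreal) \<Longrightarrow> \<exists>x\<in>A. f x \<noteq> 0"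
proof (rule ccontr)
  assume "infsum f A \<noteq> 0" "\<not> (\<exists>x\<in>A. f x \<noteq> 0)"
  thus False using infsum_0[of A f] by auto
qed

lemma H_support: "gprod G1 G2 r q \<noteq> 0 \<Longrightarrow> q - r \<in> Sigma_set 1"
proof -
  assume "gprod G1 G2 r q \<noteq> 0"
  then obtain s where "G1 r s * G2 s q \<noteq> 0" unfolding gprod_def using infsum_nz by blast
  from term_bound[OF this] show ?thesis by blast
qed

lemma H_bound: "gprod G1 G2 r q \<le> ennreal (hb r q)"
proof -
  obtain k h where r: "r = (k,h)" by (cases r)
  define M where "M = {(k-2,h+2),(k,h),(k+2,h-2)}"
  define f where "f s = G1 r s * G2 s q" for s
  define c where "c = (if q - r \<in> Tset then exp 4 * exp (PP q - PP r + 2 * Dv (q - r)) else 0)"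
  have fM: "f s = 0" if "s \<notin> M" for s
  proof (rule ccontr)
    assume "f s \<noteq> 0"
    hence "G1 (k,h) s \<noteq> 0" unfolding f_def r by auto
    from G1_nz[OF this] that show False unfolding M_def by auto
  qed
  have fc: "f s \<le> ennreal c" for s
  proof (cases "f s = 0")
    case False
    hence "G1 r s * G2 s q \<noteq> 0" unfolding f_def .
    from term_bound[OF this] have "f s \<le> ennreal (exp 4 * exp (PP q - PP r + 2 * Dv (q - r)))" "q - r \<in> Tset"
      unfolding f_def by auto
    thus ?thesis unfolding c_def by simp
  qed simp
  have "gprod G1 G2 r q = infsum f UNIV" unfolding gprod_def f_def ..
  also have "\<dots> = infsum f M" by (rule infsum_cong_neutral) (use fM in auto)
  also have "\<dots> = sum f M" unfolding M_def by (rule infsum_finite) simp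
  also have "\<dots> \<le> of_nat (card M) * ennreal c" by (rule sum_bounded_above) (rule fc)
  also have "\<dots> \<le> of_nat 3 * ennreal c"
  proof -
    have "card M \<le> 3" unfolding M_def by (rule order_trans[OF card_insert_le_m1]) (auto intro: order_trans[OF card_insert_le_m1])
    thus ?thesis by (intro mult_right_mono) auto
  qed
  also have "\<dots> = ennreal (hb r q)"
  proof -
    have "c \<ge> 0" unfolding c_def by simp
    hence "ennreal (3 * c) = of_nat 3 * ennreal c" by (simp add: ennreal_mult)
    moreover have "hb r q = 3 * c" unfolding hb_def c_def by simp
    ultimately show ?thesis by simp
  qed
  finally show ?thesis .
qed



lemma half_pow: "(1/2::real) ^ n = exp (- ln 2 * real n)"
proof -
  have "(1/2::real) ^ n = (1/2) powr (real n)" by (simp add: powr_realpow)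
  also have "\<dots> = exp (real n * ln (1/2))" unfolding powr_def by simp
  also have "ln (1/2::real) = - ln 2" by (simp add: ln_div)
  finally show ?thesis by (simp add: mult.commute)
qed

lemma geo2: "(\<Sum>i<n. (1/2::real) ^ i) \<le> 2"
proof -
  have "(\<Sum>i<n. (1/2::real) ^ i) = (1 - (1/2)^n) / (1 - 1/2)" using sum_gp_strict[of "1/2::real" n] by simp
  also have "\<dots> \<le> 1 / (1 - 1/2)" by (intro divide_right_mono) auto
  finally show ?thesis by simp
qed

lemma ptw:
  assumes "v \<in> Tset"
  shows "exp (- ln 8 * Dv v) \<le> 16 * ((1/2) ^ nat (snd v + 2) * (1/2) ^ nat (fst v + snd v))"
proof -
  define u where "u = snd v + 2"
  define d where "d = fst v + snd v"
  have ud: "u \<ge> 0" "d \<ge> 0" "u \<le> 2 * d + 4" using assms unfolding Tset_def u_def d_def by auto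
  have l8: "ln (8::real) = 3 * ln 2"
  proof -
    have "ln ((2::real)^3) = real 3 * ln 2" using ln_realpow[of 2 3] by simp
    thus ?thesis by simp
  qed
  have l16: "(16::real) = exp (4 * ln 2)"
  proof -
    have "exp (real 4 * ln (2::real)) = exp (ln 2) ^ 4" by (rule exp_of_nat_mult)
    thus ?thesis by simp
  qed
  have "16 * ((1/2) ^ nat u * (1/2) ^ nat d) = exp (4 * ln 2 - ln 2 * real_of_int u - ln 2 * real_of_int d)"
    unfolding half_pow l16 using ud by (simp add: exp_add[symmetric] exp_diff algebra_simps)
  moreover have "exp (- ln 8 * Dv v) = exp (- 3 * ln 2 * real_of_int d)"
    unfolding Dv_def d_def l8 by simp
  moreover have "- 3 * ln 2 * real_of_int d \<le> 4 * ln 2 - ln 2 * real_of_int u - ln 2 * real_of_int d"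
  proof -
    have "ln 2 * real_of_int u \<le> ln 2 * (2 * real_of_int d + 4)"
      using ud by (intro mult_left_mono) auto
    thus ?thesis by (simp add: algebra_simps)
  qed
  ultimately show ?thesis unfolding u_def d_def by simp
qed

lemma sumT:
  assumes "finite V"
  shows "(\<Sum>v\<in>V. if v \<in> Tset then exp (- ln 8 * Dv v) else 0) \<le> 64"
proof -
  define \<phi> where "\<phi> v = (nat (snd v + 2), nat (fst v + snd v))" for v :: "int \<times> int"
  define w where "w z = 16 * ((1/2::real) ^ fst z * (1/2) ^ snd z)" for z :: "nat \<times> nat"
  have inj: "inj_on \<phi> (V \<inter> Tset)"
  proof (rule inj_onI)
    fix x y assume "x \<in> V \<inter> Tset" "y \<in> V \<inter> Tset" "\<phi> x = \<phi> y"
    thus "x = y" unfolding \<phi>_def Tset_def by (cases x, cases y) auto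
  qed
  have fin: "finite (\<phi> ` (V \<inter> Tset))" using assms by simp
  obtain n where n: "fst ` (\<phi> ` (V \<inter> Tset)) \<union> snd ` (\<phi> ` (V \<inter> Tset)) \<subseteq> {..<n}"
    using finite_nat_bounded[of "fst ` (\<phi> ` (V \<inter> Tset)) \<union> snd ` (\<phi> ` (V \<inter> Tset))"] fin by auto
  have sub: "\<phi> ` (V \<inter> Tset) \<subseteq> {..<n} \<times> {..<n}"
  proof
    fix z assume "z \<in> \<phi> ` (V \<inter> Tset)"
    hence "fst z \<in> {..<n}" "snd z \<in> {..<n}" using n by auto
    thus "z \<in> {..<n} \<times> {..<n}" by (cases z) auto
  qed
  have "(\<Sum>v\<in>V. if v \<in> Tset then exp (- ln 8 * Dv v) else 0) = (\<Sum>v\<in>V \<inter> Tset. exp (- ln 8 * Dv v))"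
    using assms sum.inter_restrict[of V "\<lambda>v. exp (- ln 8 * Dv v)" Tset] by simp
  also have "\<dots> \<le> (\<Sum>v\<in>V \<inter> Tset. w (\<phi> v))"
    by (intro sum_mono) (use ptw in \<open>auto simp: w_def \<phi>_def\<close>)
  also have "\<dots> = (\<Sum>z\<in>\<phi> ` (V \<inter> Tset). w z)" by (rule sum.reindex[OF inj, symmetric, unfolded comp_def])
  also have "\<dots> \<le> (\<Sum>z\<in>{..<n} \<times> {..<n}. w z)"
    by (rule sum_mono2) (use sub in \<open>auto simp: w_def\<close>)
  also have "\<dots> = 16 * ((\<Sum>a<n. (1/2::real) ^ a) * (\<Sum>b<n. (1/2::real) ^ b))"
  proof -
    have "(\<Sum>z\<in>{..<n} \<times> {..<n}. w z) = (\<Sum>a<n. \<Sum>b<n. w (a,b))"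
      by (simp add: sum.cartesian_product)
    also have "\<dots> = (\<Sum>a<n. \<Sum>b<n. 16 * ((1/2::real) ^ a * (1/2) ^ b))" unfolding w_def by simp
    also have "\<dots> = 16 * ((\<Sum>a<n. (1/2::real) ^ a) * (\<Sum>b<n. (1/2::real) ^ b))"
      by (simp add: sum_distrib_left sum_distrib_right ac_simps)
    finally show ?thesis .
  qed
  also have "\<dots> \<le> 16 * (2 * 2)"
    using geo2[of n] by (intro mult_left_mono mult_mono) (auto intro: sum_nonneg)
  finally show ?thesis by simp
qed



definition AA :: real where "AA = 192 * exp 4"
definition BB :: real where "BB = 2 + ln 8"

lemma Dv_split: "Dv (q - p) = Dv (r - p) + Dv (q - r)"
  unfolding Dv_def by (cases p, cases q, cases r) simp

lemma Tset_Dv: "v \<in> Tset \<Longrightarrow> Dv v \<ge> 0" unfolding Tset_def Dv_def by auto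

lemma gpow_Suc_Suc: "gpow G (Suc (Suc n)) = gprod (gpow G (Suc n)) G" by simp

lemma step_real:
  "(if q - r \<in> Tset then 3 * (exp 4 * exp (PP q - PP r + 2 * Dv (q - r))) else 0)
   * (AA ^ Suc n * exp (PP r - PP p + BB * Dv (r - p)))
   = AA ^ Suc n * 3 * exp 4 * exp (PP q - PP p + BB * Dv (q - p))
     * (if q - r \<in> Tset then exp (- ln 8 * Dv (q - r)) else 0)"
proof -
  have "exp (PP q - PP r + 2 * Dv (q - r)) * exp (PP r - PP p + BB * Dv (r - p))
      = exp (PP q - PP p + BB * Dv (q - p)) * exp (- ln 8 * Dv (q - r))"
    unfolding exp_add[symmetric] Dv_split[of q p r] BB_def by (simp add: algebra_simps)
  thus ?thesis by (simp add: algebra_simps)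
qed

lemma main_bound:
  assumes "l \<ge> 1"
  shows "gpow (gprod G1 G2) l p q \<le> ennreal (AA ^ l * exp (PP q - PP p + BB * Dv (q - p)))"
  using assms
proof (induction l arbitrary: q rule: nat_induct_at_least)
  case base
  have "gpow (gprod G1 G2) 1 p q = gprod G1 G2 p q" by simp
  also have "\<dots> \<le> ennreal (hb p q)" by (rule H_bound)
  also have "\<dots> \<le> ennreal (AA ^ 1 * exp (PP q - PP p + BB * Dv (q - p)))"
  proof (cases "q - p \<in> Tset")
    case True
    have D: "Dv (q - p) \<ge> 0" using Tset_Dv[OF True] .
    have b: "2 \<le> BB" unfolding BB_def by simp
    have "hb p q = 3 * exp 4 * exp (PP q - PP p + 2 * Dv (q - p))" unfolding hb_def using True by simp
    also have "\<dots> \<le> AA * exp (PP q - PP p + BB * Dv (q - p))"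
      unfolding AA_def using D b by (intro mult_mono) (auto intro: mult_right_mono)
    finally show ?thesis by (intro ennreal_leI) simp
  next
    case False
    thus ?thesis unfolding hb_def by simp
  qed
  finally show ?case .
next
  case (Suc m)
  obtain n where m: "m = Suc n" using Suc.hyps by (cases m) auto
  define K where "K = AA ^ Suc n * 3 * exp 4 * exp (PP q - PP p + BB * Dv (q - p))"
  have K0: "K \<ge> 0" unfolding K_def AA_def by simp
  have "gpow (gprod G1 G2) (Suc m) p q
      = infsum (\<lambda>r. gpow (gprod G1 G2) (Suc n) p r * gprod G1 G2 r q) UNIV"
    unfolding m gpow_Suc_Suc gprod_def ..
  also have "\<dots> \<le> ennreal (AA ^ Suc m * exp (PP q - PP p + BB * Dv (q - p)))"
  proof (rule infsum_le_finite_sums)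
    fix F :: "(int \<times> int) set" assume F: "finite F"
    have "(\<Sum>r\<in>F. gpow (gprod G1 G2) (Suc n) p r * gprod G1 G2 r q)
        \<le> (\<Sum>r\<in>F. ennreal (hb r q * (AA ^ Suc n * exp (PP r - PP p + BB * Dv (r - p)))))"
    proof (rule sum_mono)
      fix r
      have "gpow (gprod G1 G2) (Suc n) p r * gprod G1 G2 r q
          \<le> ennreal (AA ^ Suc n * exp (PP r - PP p + BB * Dv (r - p))) * ennreal (hb r q)"
        using Suc.IH[of r] H_bound[of r q] unfolding m by (intro mult_mono) auto
      also have "\<dots> = ennreal (hb r q * (AA ^ Suc n * exp (PP r - PP p + BB * Dv (r - p))))"
        by (subst ennreal_mult'[OF hb_nonneg]) (rule mult.commute)
      finally show "gpow (gprod G1 G2) (Suc n) p r * gprod G1 G2 r q \<le> \<dots>" .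
    qed
    also have "\<dots> = ennreal (\<Sum>r\<in>F. hb r q * (AA ^ Suc n * exp (PP r - PP p + BB * Dv (r - p))))"
    proof (rule sum_ennreal)
      fix r
      have "AA \<ge> 0" unfolding AA_def by simp
      thus "0 \<le> hb r q * (AA ^ Suc n * exp (PP r - PP p + BB * Dv (r - p)))"
        using hb_nonneg[of r q] by (intro mult_nonneg_nonneg) auto
    qed
    also have "\<dots> \<le> ennreal (AA ^ Suc m * exp (PP q - PP p + BB * Dv (q - p)))"
    proof (rule ennreal_leI)
      have "(\<Sum>r\<in>F. hb r q * (AA ^ Suc n * exp (PP r - PP p + BB * Dv (r - p))))
          = (\<Sum>r\<in>F. K * (if q - r \<in> Tset then exp (- ln 8 * Dv (q - r)) else 0))"
        unfolding hb_def K_def step_real ..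
      also have "\<dots> = K * (\<Sum>r\<in>F. (if q - r \<in> Tset then exp (- ln 8 * Dv (q - r)) else 0))"
        by (simp add: sum_distrib_left)
      also have "(\<Sum>r\<in>F. (if q - r \<in> Tset then exp (- ln 8 * Dv (q - r)) else 0))
          = (\<Sum>v\<in>(\<lambda>r. q - r) ` F. (if v \<in> Tset then exp (- ln 8 * Dv v) else 0))"
        by (subst sum.reindex) (auto intro: inj_onI)
      also have "\<dots> \<le> 64" by (rule sumT) (use F in simp)
      finally have "(\<Sum>r\<in>F. hb r q * (AA ^ Suc n * exp (PP r - PP p + BB * Dv (r - p)))) \<le> K * 64"
        using K0 by (simp add: mult_left_mono)
      also have "K * 64 = AA ^ Suc m * exp (PP q - PP p + BB * Dv (q - p))"
        unfolding K_def m AA_def by simp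
      finally show "(\<Sum>r\<in>F. hb r q * (AA ^ Suc n * exp (PP r - PP p + BB * Dv (r - p))))
          \<le> AA ^ Suc m * exp (PP q - PP p + BB * Dv (q - p))" .
    qed
    finally show "(\<Sum>r\<in>F. gpow (gprod G1 G2) (Suc n) p r * gprod G1 G2 r q)
        \<le> ennreal (AA ^ Suc m * exp (PP q - PP p + BB * Dv (q - p)))" .
  qed (simp add: nonneg_summable_on_complete del: gpow.simps)
  finally show ?case .
qed



lemma Sigma_add: "a \<in> Sigma_set m \<Longrightarrow> b \<in> Sigma_set 1 \<Longrightarrow> a + b \<in> Sigma_set (Suc m)"
  unfolding Sigma_set_def by (cases a, cases b) auto

lemma support:
  assumes "l \<ge> 1"
  shows "gpow (gprod G1 G2) l p q \<noteq> 0 \<Longrightarrow> q - p \<in> Sigma_set l"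
  using assms
proof (induction l arbitrary: q rule: nat_induct_at_least)
  case base
  thus ?case using H_support by simp
next
  case (Suc m)
  obtain n where m: "m = Suc n" using Suc.hyps by (cases m) auto
  have "infsum (\<lambda>r. gpow (gprod G1 G2) (Suc n) p r * gprod G1 G2 r q) UNIV \<noteq> 0"
    using Suc.prems unfolding m gpow_Suc_Suc gprod_def .
  then obtain r where "gpow (gprod G1 G2) (Suc n) p r * gprod G1 G2 r q \<noteq> 0"
    using infsum_nz by blast
  hence a: "gpow (gprod G1 G2) m p r \<noteq> 0" and b: "gprod G1 G2 r q \<noteq> 0" unfolding m by auto
  have "(r - p) + (q - r) \<in> Sigma_set (Suc m)"
    by (rule Sigma_add[OF Suc.IH[OF a] H_support[OF b]])
  thus ?case by simp
qed

lemma PP_abs: "\<bar>PP v\<bar> \<le> \<bar>real_of_int (fst v)\<bar> / 2"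
proof -
  obtain k h where v: "v = (k,h)" by (cases v)
  define m where "m = mm (k,h)"
  define t where "t = tt (k,h)"
  have pos: "m > 0" "t \<ge> 1" unfolding m_def t_def using mm_gt0 tt_pos by auto
  have L0: "ln m - ln t \<ge> 0" unfolding m_def t_def by (rule lnR_nonneg)
  have L1: "ln m - ln t \<le> (m - t) / t" using pos by (intro ln_diff_le) auto
  have mt: "m - t \<le> \<bar>real_of_int k\<bar>" unfolding m_def t_def mm_def tt_def by auto
  have ht: "\<bar>real_of_int h\<bar> \<le> t" unfolding t_def tt_def by simp
  have "\<bar>PP v\<bar> = \<bar>real_of_int h\<bar> / 2 * (ln m - ln t)"
    unfolding v PP_eq m_def[symmetric] t_def[symmetric] using L0 by (simp add: abs_mult)
  also have "\<dots> \<le> \<bar>real_of_int h\<bar> / 2 * ((m - t) / t)" using L1 by (intro mult_left_mono) auto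
  also have "\<dots> = (\<bar>real_of_int h\<bar> / t) * ((m - t) / 2)" by (simp add: field_simps)
  also have "\<dots> \<le> 1 * ((m - t) / 2)"
    using pos ht L0 L1 by (intro mult_right_mono) (auto simp: field_simps)
  also have "\<dots> \<le> \<bar>real_of_int k\<bar> / 2" using mt by simp
  finally show ?thesis unfolding v by simp
qed



theorem mainTheorem11:
  shows "(\<exists>C3 :: real. C3 > 0 \<and>
            (\<forall>l :: nat. \<forall>p q :: int \<times> int. l \<ge> 1 \<longrightarrow> fst p \<ge> 0 \<longrightarrow> fst q \<ge> 0 \<longrightarrow>
               gpow (gprod G1 G2) l p q \<le> ennreal (C3 powr (norm1 p + norm1 q))))
       \<and> (\<forall>l :: nat. \<forall>p q :: int \<times> int. l \<ge> 1 \<longrightarrow> fst p \<ge> 0 \<longrightarrow> fst q \<ge> 0 \<longrightarrow>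
               gpow (gprod G1 G2) l p q \<noteq> 0 \<longrightarrow> q - p \<in> Sigma_set l)"
proof (intro conjI)
  show "\<forall>l :: nat. \<forall>p q :: int \<times> int. l \<ge> 1 \<longrightarrow> fst p \<ge> 0 \<longrightarrow> fst q \<ge> 0 \<longrightarrow>
               gpow (gprod G1 G2) l p q \<noteq> 0 \<longrightarrow> q - p \<in> Sigma_set l"
    using support by blast
  have AA1: "AA \<ge> 1" unfolding AA_def
  proof -
    have "(1::real) \<le> exp 4" by simp
    thus "1 \<le> 192 * exp (4::real)" by linarith
  qed
  have BB0: "BB \<ge> 0" unfolding BB_def by simp
  define C where "C = AA * exp (1/2 + BB)"
  have "C > 0" unfolding C_def using AA1 by simp
  moreover have "gpow (gprod G1 G2) l p q \<le> ennreal (C powr (norm1 p + norm1 q))"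
    if l: "l \<ge> 1" for l p q
  proof (cases "gpow (gprod G1 G2) l p q = 0")
    case True thus ?thesis by simp
  next
    case False
    define N where "N = norm1 p + norm1 q"
    have S: "q - p \<in> Sigma_set l" using support[OF l False] .
    have lD: "real l \<le> Dv (q - p)" using S unfolding Sigma_set_def Dv_def by (cases "q - p") auto
    have DN: "Dv (q - p) \<le> N" unfolding N_def Dv_def norm1_def by (cases p, cases q) auto
    have PN: "PP q - PP p \<le> N / 2"
      using PP_abs[of p] PP_abs[of q] unfolding N_def norm1_def by (cases p, cases q) auto
    have "gpow (gprod G1 G2) l p q \<le> ennreal (AA ^ l * exp (PP q - PP p + BB * Dv (q - p)))"
      by (rule main_bound[OF l])
    also have "\<dots> \<le> ennreal (AA powr N * exp ((1/2 + BB) * N))"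
    proof (rule ennreal_leI, rule mult_mono)
      have "AA ^ l = AA powr (real l)" using AA1 by (simp add: powr_realpow)
      also have "\<dots> \<le> AA powr N" using AA1 lD DN by (intro powr_mono) auto
      finally show "AA ^ l \<le> AA powr N" .
      have "BB * Dv (q - p) \<le> BB * N" using BB0 DN by (intro mult_left_mono) auto
      thus "exp (PP q - PP p + BB * Dv (q - p)) \<le> exp ((1/2 + BB) * N)"
        using PN by (simp add: algebra_simps)
    qed auto
    also have "AA powr N * exp ((1/2 + BB) * N) = C powr N"
      unfolding C_def using AA1 by (simp add: powr_def ln_mult distrib_left exp_add mult.commute)
    finally show ?thesis unfolding N_def .
  qed
  ultimately show "\<exists>C3 :: real. C3 > 0 \<and>
            (\<forall>l :: nat. \<forall>p q :: int \<times> int. l \<ge> 1 \<longrightarrow> fst p \<ge> 0 \<longrightarrow> fst q \<ge> 0 \<longrightarrow>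
               gpow (gprod G1 G2) l p q \<le> ennreal (C3 powr (norm1 p + norm1 q)))" by blast
qed

end
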